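(* The derivative test $\mathcal{D}$ is reasonable and error-free.
   Context: Let $\Omega=\{0,1\}$ and let $\Omega^\infty$ be the set of infinite sequences $\omega=(\omega_1,\omega_2,\dots)$; $\omega^t=(\omega_1,\dots,\omega_t)$ denotes the prefix and also the cylinder set $\{\hat\omega:\hat\omega^t=\omega^t\}$; $\Omega^\infty$ carries the $\sigma$-algebra generated by cylinders. $\Delta(\Omega)$ is the set of probability distributions on $\Omega$. A forecasting strategy is a function $f:\bigcup_{t\ge 0}(\Omega\times\Delta(\Omega)\times\Delta(\Omega))^t\to\Delta(\Omega)$; $F$ is the set of all forecasting strategies. For $f=(f_0,f_1)$ and $\omega$, the play path $h=h(\omega,f_0,f_1)$ is defined by $h^0=\emptyset$, $h^t=(h^{t-1},(\omega_t,f_0(h^{t-1}),f_1(h^{t-1})))$. The induced measures satisfy $P_i^f(\omega^t)=\prod_{n=1}^t f_i(h^{n-1})[\omega_n]$, $i\in\{0,1\}$. A comparison test is a function $T:\Omega^\infty\times F\times F\to\{0,\tfrac12,1\}$, measurable in $\omega$ for each fixed pair; write $\{T(\cdot,f)=k\}=\{\omega:T(\omega,f_0,f_1)=k\}$. $T$ is error-free if for all $f$ and $i\in\{0,1\}$, $P_{1-i}^f(\{T(\cdot,f)=i\})=0$. $T$ is reasonable if for all $f$, $i\in\{0,1\}$ and measurable $A$: $P_i^f(A)>0$ and $P_{1-i}^f(A)=0$ imply $P_i^f(A\cap\{T(\cdot,f)=i\})>0$. Likelihood ratios (all along the play path $h=h(\omega,f_0,f_1)$): $D^t_{f_0}f_1(\omega)=\prod_{n=1}^t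 \frac{f_1(h^{n-1})[\omega_n]}{f_0(h^{n-1})[\omega_n]}$ and $D^t_{f_1}f_0(\omega)=\prod_{n=1}^t \frac{f_0(h^{n-1})[\omega_n]}{f_1(h^{n-1})[\omega_n]}$. For $(j,k)\in\{(0,1),(1,0)\}$, $\overline{D}_{f_j}f_k(\omega)=\limsup_t D^t_{f_j}f_k(\omega)$ and $\underline{D}_{f_j}f_k(\omega)=\liminf_t D^t_{f_j}f_k(\omega)$ if $f_j(h^{n-1})[\omega_n]>0$ for all $n$, and both equal $+\infty$ otherwise; if they coincide and are finite, the common value is the derivative $D_{f_j}f_k(\omega)$. The derivative test is $\mathcal{D}(\omega,f_0,f_1)=1$ if $D_{f_1}f_0(\omega)$ exists and equals $0$; $=0$ if $D_{f_0}f_1(\omega)$ exists and equals $0$; and $=\tfrac12$ otherwise. *)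

theory Defs
  imports "HOL-Probability.Probability"
begin

text \<open>Outcomes: Omega = {0,1} is rendered as bool (False = 0, True = 1).
  Infinite sequences omega_1, omega_2, ... are functions nat => bool, with omega_n stored at index n-1.
  Distributions on Omega are bool pmfs. A history is a list of triples (outcome, forecast 0, forecast 1).\<close>

type_synonym hist = "(bool \<times> bool pmf \<times> bool pmf) list"
type_synonym strategy = "hist \<Rightarrow> bool pmf"
type_synonym seq = "nat \<Rightarrow> bool"

fun play :: "strategy \<Rightarrow> strategy \<Rightarrow> seq \<Rightarrow> nat \<Rightarrow> hist" where
  "play f0 f1 w 0 = []"
| "play f0 f1 w (Suc t) = play f0 f1 w t @ [(w t, f0 (play f0 f1 w t), f1 (play f0 f1 w t))]"

definition strat :: "nat \<Rightarrow> strategy \<Rightarrow> strategy \<Rightarrow> strategy" where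
  "strat i f0 f1 = (if i = 0 then f0 else f1)"

text \<open>The measurable space Omega^infinity with the sigma-algebra generated by cylinders
  (= the product sigma-algebra of discrete factors).\<close>
definition Omega_inf :: "seq measure" where
  "Omega_inf = PiM UNIV (\<lambda>_::nat. count_space (UNIV :: bool set))"

definition cyl :: "seq \<Rightarrow> nat \<Rightarrow> seq set" where
  "cyl w t = {w' \<in> space Omega_inf. \<forall>n<t. w' n = w n}"

definition induced_measure :: "strategy \<Rightarrow> strategy \<Rightarrow> nat \<Rightarrow> seq measure \<Rightarrow> bool" where
  "induced_measure f0 f1 i P \<longleftrightarrow>
     sets P = sets Omega_inf \<and> prob_space P \<and>
     (\<forall>w t. emeasure P (cyl w t) =
        ennreal (\<Prod>n<t. pmf (strat i f0 f1 (play f0 f1 w n)) (w n)))"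

definition lratio :: "strategy \<Rightarrow> strategy \<Rightarrow> nat \<Rightarrow> nat \<Rightarrow> seq \<Rightarrow> nat \<Rightarrow> real" where
  "lratio f0 f1 j k w t =
     (\<Prod>n<t. pmf (strat k f0 f1 (play f0 f1 w n)) (w n) / pmf (strat j f0 f1 (play f0 f1 w n)) (w n))"

definition upperD :: "strategy \<Rightarrow> strategy \<Rightarrow> nat \<Rightarrow> nat \<Rightarrow> seq \<Rightarrow> ereal" where
  "upperD f0 f1 j k w =
     (if \<forall>n. pmf (strat j f0 f1 (play f0 f1 w n)) (w n) > 0
      then limsup (\<lambda>t. ereal (lratio f0 f1 j k w t)) else \<infinity>)"

definition lowerD :: "strategy \<Rightarrow> strategy \<Rightarrow> nat \<Rightarrow> nat \<Rightarrow> seq \<Rightarrow> ereal" where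
  "lowerD f0 f1 j k w =
     (if \<forall>n. pmf (strat j f0 f1 (play f0 f1 w n)) (w n) > 0
      then liminf (\<lambda>t. ereal (lratio f0 f1 j k w t)) else \<infinity>)"

definition deriv_exists :: "strategy \<Rightarrow> strategy \<Rightarrow> nat \<Rightarrow> nat \<Rightarrow> seq \<Rightarrow> bool" where
  "deriv_exists f0 f1 j k w \<longleftrightarrow>
     upperD f0 f1 j k w = lowerD f0 f1 j k w \<and> \<bar>upperD f0 f1 j k w\<bar> \<noteq> \<infinity>"

definition deriv :: "strategy \<Rightarrow> strategy \<Rightarrow> nat \<Rightarrow> nat \<Rightarrow> seq \<Rightarrow> real" where
  "deriv f0 f1 j k w = real_of_ereal (upperD f0 f1 j k w)"

definition derivative_test :: "seq \<Rightarrow> strategy \<Rightarrow> strategy \<Rightarrow> real" where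
  "derivative_test w f0 f1 =
     (if deriv_exists f0 f1 1 0 w \<and> deriv f0 f1 1 0 w = 0 then 1
      else if deriv_exists f0 f1 0 1 w \<and> deriv f0 f1 0 1 w = 0 then 0
      else 1/2)"

definition comparison_test :: "(seq \<Rightarrow> strategy \<Rightarrow> strategy \<Rightarrow> real) \<Rightarrow> bool" where
  "comparison_test T \<longleftrightarrow>
     (\<forall>f0 f1. (\<lambda>w. T w f0 f1) \<in> Omega_inf \<rightarrow>\<^sub>M count_space UNIV \<and>
              (\<forall>w. T w f0 f1 \<in> {0, 1/2, 1}))"

definition error_free ::
  "(strategy \<Rightarrow> strategy \<Rightarrow> nat \<Rightarrow> seq measure) \<Rightarrow> (seq \<Rightarrow> strategy \<Rightarrow> strategy \<Rightarrow> real) \<Rightarrow> bool" where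
  "error_free P T \<longleftrightarrow>
     (\<forall>f0 f1. \<forall>i\<in>{0,1}.
        emeasure (P f0 f1 (1 - i)) {w \<in> space Omega_inf. T w f0 f1 = real i} = 0)"

definition reasonable ::
  "(strategy \<Rightarrow> strategy \<Rightarrow> nat \<Rightarrow> seq measure) \<Rightarrow> (seq \<Rightarrow> strategy \<Rightarrow> strategy \<Rightarrow> real) \<Rightarrow> bool" where
  "reasonable P T \<longleftrightarrow>
     (\<forall>f0 f1. \<forall>i\<in>{0,1}. \<forall>A\<in>sets Omega_inf.
        emeasure (P f0 f1 i) A > 0 \<longrightarrow> emeasure (P f0 f1 (1 - i)) A = 0 \<longrightarrow>
        emeasure (P f0 f1 i) (A \<inter> {w \<in> space Omega_inf. T w f0 f1 = real i}) > 0)"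

end

theory Submission
  imports Defs
begin

definition dep :: "nat \<Rightarrow> (seq \<Rightarrow> 'b) \<Rightarrow> bool" where
  "dep n h \<longleftrightarrow> (\<forall>w w'. (\<forall>k<n. w k = w' k) \<longrightarrow> h w = h w')"

definition ext :: "bool list \<Rightarrow> seq" where
  "ext xs = (\<lambda>k. if k < length xs then xs ! k else False)"

lemma space_Omega[simp]: "space Omega_inf = UNIV"
  by (simp add: Omega_inf_def space_PiM)

lemma play_dep: "(\<forall>k<n. w k = w' k) \<Longrightarrow> play f0 f1 w n = play f0 f1 w' n"
  by (induction n) auto

lemma map_eq_iff: "(map w [0..<n] = xs) \<longleftrightarrow> (length xs = n \<and> (\<forall>k<n. w k = xs ! k))"
  by (metis (no_types, lifting) length_map length_upt diff_zero nth_map_upt add_0 list_eq_iff_nth_eq)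

lemma prefix_meas: "(\<lambda>w. map w [0..<n]) \<in> Omega_inf \<rightarrow>\<^sub>M count_space UNIV"
proof (subst measurable_count_space_eq2_countable, intro conjI ballI)
  fix xs :: "bool list"
  have eq: "(\<lambda>w. map w [0..<n]) -` {xs} \<inter> space Omega_inf =
     (if length xs = n then {w \<in> space Omega_inf. \<forall>k<n. w k = xs ! k} else {})"
    by (auto simp: map_eq_iff)
  have "{w \<in> space Omega_inf. \<forall>k<n. w k = xs ! k} \<in> sets Omega_inf"
    unfolding Omega_inf_def by measurable
  then show "(\<lambda>w. map w [0..<n]) -` {xs} \<inter> space Omega_inf \<in> sets Omega_inf"
    unfolding eq by auto
qed auto

lemma dep_meas:
  assumes "dep n h" "\<And>w. h w \<in> space N"
  shows "h \<in> Omega_inf \<rightarrow>\<^sub>M N"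
proof -
  have "h w = h (ext (map w [0..<n]))" for w
    using assms(1) unfolding dep_def by (simp add: ext_def)
  then have eq: "h = (\<lambda>xs. h (ext xs)) \<circ> (\<lambda>w. map w [0..<n])" by auto
  have "(\<lambda>xs. h (ext xs)) \<in> count_space UNIV \<rightarrow>\<^sub>M N"
    using assms(2) by (simp add: measurable_count_space_eq1)
  show ?thesis by (subst eq) (rule measurable_comp[OF prefix_meas], fact)
qed

lemma depS_sets:
  assumes "dep n (\<lambda>w. w \<in> B)" shows "B \<in> sets Omega_inf"
proof -
  have "(\<lambda>w. w \<in> B) \<in> Omega_inf \<rightarrow>\<^sub>M count_space UNIV"
    using dep_meas[OF assms] by simp
  then have "{w \<in> space Omega_inf. w \<in> B} \<in> sets Omega_inf"
    by measurable
  then show ?thesis by simp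
qed

definition step :: "nat \<Rightarrow> strategy \<Rightarrow> strategy \<Rightarrow> seq \<Rightarrow> nat \<Rightarrow> real" where
  "step X f0 f1 w n = pmf (strat X f0 f1 (play f0 f1 w n)) (w n)"

definition pw :: "nat \<Rightarrow> strategy \<Rightarrow> strategy \<Rightarrow> seq \<Rightarrow> nat \<Rightarrow> real" where
  "pw X f0 f1 w t = (\<Prod>n<t. step X f0 f1 w n)"

lemma step_nonneg: "step X f0 f1 w n \<ge> 0" by (simp add: step_def)
lemma pw_nonneg: "pw X f0 f1 w t \<ge> 0" by (simp add: pw_def step_nonneg prod_nonneg)

lemma step_dep: "(\<forall>k<Suc n. w k = w' k) \<Longrightarrow> step X f0 f1 w n = step X f0 f1 w' n"
  unfolding step_def using play_dep[of n w w' f0 f1] by auto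

lemma pw_dep: "dep t (\<lambda>w. pw X f0 f1 w t)"
  unfolding dep_def pw_def by (auto intro!: prod.cong step_dep)

lemma lratio_step: "lratio f0 f1 j k w t = (\<Prod>n<t. step k f0 f1 w n / step j f0 f1 w n)"
  by (simp add: lratio_def step_def)

lemma lratio_dep: "dep t (\<lambda>w. lratio f0 f1 j k w t)"
  unfolding dep_def lratio_step
proof (intro allI impI prod.cong refl)
  fix w w' :: seq and x assume h: "\<forall>k<t. w k = w' k" "x \<in> {..<t}"
  then have "\<forall>k'<Suc x. w k' = w' k'" by auto
  then show "step k f0 f1 w x / step j f0 f1 w x = step k f0 f1 w' x / step j f0 f1 w' x"
    using step_dep by metis
qed

lemma dep_mono: "dep n h \<Longrightarrow> n \<le> m \<Longrightarrow> dep m h"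
  unfolding dep_def by auto

lemma cyl_eq: "cyl w t = {w'. \<forall>n<t. w' n = w n}"
  by (simp add: cyl_def)

lemma sum_formula:
  assumes M: "induced_measure f0 f1 X M" and D: "dep t (\<lambda>w. w \<in> D)"
  shows "emeasure M D = (\<Sum>xs\<in>{xs. length xs = t \<and> ext xs \<in> D}. ennreal (pw X f0 f1 (ext xs) t))"
proof -
  let ?I = "{xs. length xs = t \<and> ext xs \<in> D}"
  have fin: "finite ?I"
    by (rule finite_subset[OF _ finite_lists_length_eq[of "UNIV::bool set" t]]) auto
  have cylD: "cyl (ext xs) t \<in> sets M" for xs
  proof -
    have "dep t (\<lambda>w'. w' \<in> cyl (ext xs) t)" unfolding dep_def cyl_eq by auto
    then show ?thesis using M depS_sets unfolding induced_measure_def by auto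
  qed
  have eqD: "D = (\<Union>xs\<in>?I. cyl (ext xs) t)"
  proof (intro equalityI subsetI)
    fix w assume "w \<in> D"
    moreover have "\<forall>k<t. ext (map w [0..<t]) k = w k" by (simp add: ext_def)
    ultimately have "ext (map w [0..<t]) \<in> D" using D unfolding dep_def by metis
    moreover have "w \<in> cyl (ext (map w [0..<t])) t" by (simp add: cyl_eq ext_def)
    ultimately show "w \<in> (\<Union>xs\<in>?I. cyl (ext xs) t)"
      by (intro UN_I[of "map w [0..<t]"]) auto
  next
    fix w assume "w \<in> (\<Union>xs\<in>?I. cyl (ext xs) t)"
    then obtain xs where "length xs = t" "ext xs \<in> D" "\<forall>n<t. w n = ext xs n"
      by (auto simp: cyl_eq)
    then show "w \<in> D" using D unfolding dep_def by metis
  qed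
  have disj: "disjoint_family_on (\<lambda>xs. cyl (ext xs) t) ?I"
    unfolding disjoint_family_on_def
  proof (intro ballI impI)
    fix xs ys assume "xs \<in> ?I" "ys \<in> ?I" "xs \<noteq> ys"
    then obtain k where k: "k < t" "xs ! k \<noteq> ys ! k"
      by (auto simp: list_eq_iff_nth_eq)
    then show "cyl (ext xs) t \<inter> cyl (ext ys) t = {}"
      using \<open>xs \<in> ?I\<close> \<open>ys \<in> ?I\<close> by (auto simp: cyl_eq ext_def)
  qed
  have "emeasure M D = (\<Sum>xs\<in>?I. emeasure M (cyl (ext xs) t))"
    by (subst eqD, rule sum_emeasure[symmetric]) (use cylD disj fin in auto)
  also have "\<dots> = (\<Sum>xs\<in>?I. ennreal (pw X f0 f1 (ext xs) t))"
    using M unfolding induced_measure_def pw_def step_def by simp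
  finally show ?thesis .
qed

lemma compare:
  assumes M1: "induced_measure f0 f1 X M1" and M2: "induced_measure f0 f1 Y M2"
    and D: "dep t (\<lambda>w. w \<in> D)" and a: "a \<ge> 0" and b: "b \<ge> 0"
    and le: "\<And>w. w \<in> D \<Longrightarrow> a * pw X f0 f1 w t \<le> b * pw Y f0 f1 w t"
  shows "ennreal a * emeasure M1 D \<le> ennreal b * emeasure M2 D"
proof -
  let ?I = "{xs. length xs = t \<and> ext xs \<in> D}"
  have "ennreal a * emeasure M1 D = (\<Sum>xs\<in>?I. ennreal (a * pw X f0 f1 (ext xs) t))"
    unfolding sum_formula[OF M1 D] sum_distrib_left
    by (auto intro!: sum.cong simp: ennreal_mult a pw_nonneg)
  also have "\<dots> \<le> (\<Sum>xs\<in>?I. ennreal (b * pw Y f0 f1 (ext xs) t))"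
    by (intro sum_mono ennreal_leI le) auto
  also have "\<dots> = ennreal b * emeasure M2 D"
    unfolding sum_formula[OF M2 D] sum_distrib_left
    by (auto intro!: sum.cong simp: ennreal_mult b pw_nonneg)
  finally show ?thesis .
qed

lemma step_meas[measurable]: "(\<lambda>w. step X f0 f1 w n) \<in> borel_measurable Omega_inf"
proof (rule dep_meas)
  show "dep (Suc n) (\<lambda>w. step X f0 f1 w n)" unfolding dep_def using step_dep by metis
qed auto

lemma lratio_meas[measurable]: "(\<lambda>w. lratio f0 f1 j k w t) \<in> borel_measurable Omega_inf"
  by (rule dep_meas[OF lratio_dep]) auto

lemma upperD_alt: "upperD f0 f1 j k w = (if \<forall>n. step j f0 f1 w n > 0
      then limsup (\<lambda>t. ereal (lratio f0 f1 j k w t)) else \<infinity>)"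
  by (simp add: upperD_def step_def)

lemma lowerD_alt: "lowerD f0 f1 j k w = (if \<forall>n. step j f0 f1 w n > 0
      then liminf (\<lambda>t. ereal (lratio f0 f1 j k w t)) else \<infinity>)"
  by (simp add: lowerD_def step_def)

lemma upperD_meas[measurable]: "(\<lambda>w. upperD f0 f1 j k w) \<in> borel_measurable Omega_inf"
  unfolding upperD_alt by measurable

lemma lowerD_meas[measurable]: "(\<lambda>w. lowerD f0 f1 j k w) \<in> borel_measurable Omega_inf"
  unfolding lowerD_alt by measurable

lemma deriv0_iff: "(deriv_exists f0 f1 j k w \<and> deriv f0 f1 j k w = 0) \<longleftrightarrow>
    (upperD f0 f1 j k w = 0 \<and> lowerD f0 f1 j k w = 0)"
  unfolding deriv_exists_def deriv_def
  by (cases "upperD f0 f1 j k w") (auto simp: zero_ereal_def)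

lemma derivative_test_alt: "derivative_test w f0 f1 =
  (if upperD f0 f1 1 0 w = 0 \<and> lowerD f0 f1 1 0 w = 0 then 1
   else if upperD f0 f1 0 1 w = 0 \<and> lowerD f0 f1 0 1 w = 0 then 0 else 1/2)"
  unfolding derivative_test_def deriv0_iff by simp

lemma derivative_test_meas: "(\<lambda>w. derivative_test w f0 f1) \<in> Omega_inf \<rightarrow>\<^sub>M count_space UNIV"
  unfolding derivative_test_alt by measurable

lemma comparison: "comparison_test derivative_test"
  unfolding comparison_test_def using derivative_test_meas by (auto simp: derivative_test_def)

lemma pw_ratio:
  assumes "\<forall>n<t. step j f0 f1 w n > 0"
  shows "pw k f0 f1 w t = lratio f0 f1 j k w t * pw j f0 f1 w t"
  unfolding pw_def lratio_step prod.distrib[symmetric]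
  by (rule prod.cong) (use assms in auto)

lemma lratio_nonneg: "lratio f0 f1 j k w t \<ge> 0"
  unfolding lratio_step by (intro prod_nonneg divide_nonneg_nonneg step_nonneg ballI)

lemma dep_D:
  "dep N (\<lambda>w. w \<in> {w. (\<forall>n<N. step j f0 f1 w n > 0) \<and> P (lratio f0 f1 j k w N)})"
proof -
  have s1: "step j f0 f1 w n = step j f0 f1 w' n" if "\<forall>k<N. w k = w' k" "n < N" for w w' n
    using step_dep[of n w w'] that by auto
  have s2: "lratio f0 f1 j k w N = lratio f0 f1 j k w' N" if "\<forall>k<N. w k = w' k" for w w'
    using lratio_dep that unfolding dep_def by blast
  show ?thesis unfolding dep_def
  proof (intro allI impI)
    fix w w' :: seq assume h: "\<forall>k<N. w k = w' k"
    have "\<forall>n<N. step j f0 f1 w n = step j f0 f1 w' n" using s1 h by blast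
    moreover have "lratio f0 f1 j k w N = lratio f0 f1 j k w' N" using s2 h by blast
    ultimately show "(w \<in> {w. (\<forall>n<N. step j f0 f1 w n > 0) \<and> P (lratio f0 f1 j k w N)}) =
       (w' \<in> {w. (\<forall>n<N. step j f0 f1 w n > 0) \<and> P (lratio f0 f1 j k w N)})" by simp
  qed
qed

lemma induced_sets: "induced_measure f0 f1 X M \<Longrightarrow> sets M = sets Omega_inf"
  by (simp add: induced_measure_def)

lemma induced_prob: "induced_measure f0 f1 X M \<Longrightarrow> prob_space M"
  by (simp add: induced_measure_def)

lemma Z_null:
  assumes Mj: "induced_measure f0 f1 j Mj" and Mk: "induced_measure f0 f1 k Mk"
  shows "emeasure Mk {w. upperD f0 f1 j k w = 0 \<and> lowerD f0 f1 j k w = 0} = 0"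
proof -
  let ?Z = "{w. upperD f0 f1 j k w = 0 \<and> lowerD f0 f1 j k w = 0}"
  let ?L = "\<lambda>w t. lratio f0 f1 j k w t"
  have Zprop: "(\<forall>n. step j f0 f1 w n > 0) \<and> (?L w \<longlonglongrightarrow> 0)" if "w \<in> ?Z" for w
  proof -
    have pos: "\<forall>n. step j f0 f1 w n > 0"
      using that by (auto simp: upperD_alt split: if_splits)
    then have "limsup (\<lambda>t. ereal (?L w t)) = 0" "liminf (\<lambda>t. ereal (?L w t)) = 0"
      using that by (auto simp: upperD_alt lowerD_alt)
    then have "(\<lambda>t. ereal (?L w t)) \<longlonglongrightarrow> 0"
      by (intro Liminf_eq_Limsup) auto
    then have "(\<lambda>t. ereal (?L w t)) \<longlonglongrightarrow> ereal 0" by (simp add: zero_ereal_def)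
    then show ?thesis using pos lim_ereal by blast
  qed
  have "emeasure Mk ?Z \<le> 0 + ennreal e" if e: "e > 0" for e
  proof -
    define B where "B N = {w \<in> space Omega_inf. \<forall>t\<ge>N. (\<forall>n<t. step j f0 f1 w n > 0) \<and> ?L w t < e}" for N
    define D where "D N = {w. (\<forall>n<N. step j f0 f1 w n > 0) \<and> ?L w N < e}" for N
    have Bsets: "B N \<in> sets Mk" for N
      unfolding induced_sets[OF Mk] B_def by measurable
    have inc: "incseq B" unfolding incseq_def B_def by (auto intro: order_trans)
    have ZB: "?Z \<subseteq> (\<Union>N. B N)"
    proof
      fix w assume "w \<in> ?Z"
      from Zprop[OF this] have pos: "\<forall>n. step j f0 f1 w n > 0" and lim: "?L w \<longlonglongrightarrow> 0" by auto
      from lim e obtain N where "\<forall>t\<ge>N. dist (?L w t) 0 < e"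
        unfolding lim_sequentially by blast
      then have "w \<in> B N" using pos by (auto simp: B_def)
      then show "w \<in> (\<Union>N. B N)" by auto
    qed
    have BD: "emeasure Mk (B N) \<le> ennreal e" for N
    proof -
      have "B N \<subseteq> D N" unfolding B_def D_def by auto
      then have "emeasure Mk (B N) \<le> emeasure Mk (D N)"
        by (intro emeasure_mono) (use dep_D[of N j f0 f1 "\<lambda>x. x < e" k] depS_sets induced_sets[OF Mk] D_def in auto)
      also have "\<dots> = ennreal 1 * emeasure Mk (D N)" by simp
      also have "\<dots> \<le> ennreal e * emeasure Mj (D N)"
      proof (rule compare[OF Mk Mj])
        show "dep N (\<lambda>w. w \<in> D N)" unfolding D_def by (rule dep_D)
        fix w assume "w \<in> D N"
        then have pos: "\<forall>n<N. step j f0 f1 w n > 0" and L: "?L w N < e" by (auto simp: D_def)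
        have "1 * pw k f0 f1 w N = ?L w N * pw j f0 f1 w N"
          unfolding mult_1 by (rule pw_ratio[OF pos])
        also have "\<dots> \<le> e * pw j f0 f1 w N"
          using L pw_nonneg by (intro mult_right_mono) auto
        finally show "1 * pw k f0 f1 w N \<le> e * pw j f0 f1 w N" .
      qed (use e in auto)
      also have "\<dots> \<le> ennreal e * 1"
        using prob_space.emeasure_le_1[OF induced_prob[OF Mj]] by (intro mult_left_mono) auto
      finally show ?thesis by simp
    qed
    have "emeasure Mk ?Z \<le> emeasure Mk (\<Union>N. B N)"
      using ZB Bsets by (intro emeasure_mono) auto
    also have "\<dots> = (SUP N. emeasure Mk (B N))"
      using Bsets inc by (intro SUP_emeasure_incseq[symmetric]) auto
    also have "\<dots> \<le> ennreal e" using BD by (intro SUP_least) auto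
    finally show ?thesis by simp
  qed
  then show ?thesis using ennreal_le_epsilon[of 0 "emeasure Mk ?Z"] by (simp add: le_zero_eq)
qed

lemma Zsets: "{w. upperD f0 f1 j k w = 0 \<and> lowerD f0 f1 j k w = 0} \<in> sets Omega_inf"
proof -
  have "{w \<in> space Omega_inf. upperD f0 f1 j k w = 0 \<and> lowerD f0 f1 j k w = 0} \<in> sets Omega_inf"
    by measurable
  then show ?thesis by simp
qed

lemma test_sets: "{w \<in> space Omega_inf. derivative_test w f0 f1 = c} \<in> sets Omega_inf"
  using derivative_test_meas[of f0 f1] by measurable

lemma errfree:
  assumes P: "\<forall>f0 f1. \<forall>i\<in>{0,1}. induced_measure f0 f1 i (P f0 f1 i)"
  shows "error_free P derivative_test"
  unfolding error_free_def
proof (intro allI ballI)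
  fix f0 f1 and i :: nat assume i: "i \<in> {0,1}"
  have P0: "induced_measure f0 f1 0 (P f0 f1 0)" and P1: "induced_measure f0 f1 1 (P f0 f1 1)"
    using P by auto
  show "emeasure (P f0 f1 (1 - i)) {w \<in> space Omega_inf. derivative_test w f0 f1 = real i} = 0"
  proof (cases "i = 0")
    case True
    have "{w \<in> space Omega_inf. derivative_test w f0 f1 = real i} \<subseteq>
          {w. upperD f0 f1 0 1 w = 0 \<and> lowerD f0 f1 0 1 w = 0}"
      using True by (auto simp: derivative_test_alt split: if_splits)
    then have "emeasure (P f0 f1 1) {w \<in> space Omega_inf. derivative_test w f0 f1 = real i}
        \<le> emeasure (P f0 f1 1) {w. upperD f0 f1 0 1 w = 0 \<and> lowerD f0 f1 0 1 w = 0}"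
      by (intro emeasure_mono) (use Zsets induced_sets[OF P1] in auto)
    also have "\<dots> = 0" by (rule Z_null[OF P0 P1])
    finally show ?thesis using True by simp
  next
    case False
    then have i1: "i = 1" using i by auto
    have "{w \<in> space Omega_inf. derivative_test w f0 f1 = real i} \<subseteq>
          {w. upperD f0 f1 1 0 w = 0 \<and> lowerD f0 f1 1 0 w = 0}"
      using i1 by (auto simp: derivative_test_alt split: if_splits)
    then have "emeasure (P f0 f1 0) {w \<in> space Omega_inf. derivative_test w f0 f1 = real i}
        \<le> emeasure (P f0 f1 0) {w. upperD f0 f1 1 0 w = 0 \<and> lowerD f0 f1 1 0 w = 0}"
      by (intro emeasure_mono) (use Zsets induced_sets[OF P0] in auto)
    also have "\<dots> = 0" by (rule Z_null[OF P1 P0])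
    finally show ?thesis using i1 by simp
  qed
qed

definition Vt :: "strategy \<Rightarrow> strategy \<Rightarrow> nat \<Rightarrow> nat \<Rightarrow> real \<Rightarrow> nat \<Rightarrow> nat \<Rightarrow> seq set" where
  "Vt f0 f1 j k e m T = {w. \<exists>t. m \<le> t \<and> t < T \<and> lratio f0 f1 j k w t > e}"

lemma Vt_sets: "Vt f0 f1 j k e m T \<in> sets Omega_inf"
proof -
  have "{w \<in> space Omega_inf. \<exists>t. m \<le> t \<and> t < T \<and> lratio f0 f1 j k w t > e} \<in> sets Omega_inf"
    by measurable
  then show ?thesis by (simp add: Vt_def)
qed

lemma pw_le_when_ratio:
  assumes "lratio f0 f1 j k w T > e" "e \<ge> 0"
  shows "e * pw j f0 f1 w T \<le> 1 * pw k f0 f1 w T"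
proof (cases "\<forall>n<T. step j f0 f1 w n > 0")
  case True
  have "e * pw j f0 f1 w T \<le> lratio f0 f1 j k w T * pw j f0 f1 w T"
    using assms pw_nonneg by (intro mult_right_mono) auto
  also have "\<dots> = 1 * pw k f0 f1 w T" unfolding mult_1 by (rule pw_ratio[OF True, symmetric])
  finally show ?thesis .
next
  case False
  then obtain n where "n < T" "\<not> step j f0 f1 w n > 0" by auto
  then have "step j f0 f1 w n = 0" using step_nonneg[of j f0 f1 w n] by auto
  then have "pw j f0 f1 w T = 0" unfolding pw_def using \<open>n < T\<close>
    by (intro prod_zero) auto
  then show ?thesis using pw_nonneg[of k f0 f1 w T] by simp
qed

lemma R2_finite:
  assumes Mj: "induced_measure f0 f1 j Mj" and Mk: "induced_measure f0 f1 k Mk"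
    and B: "dep n (\<lambda>w. w \<in> B)" and nm: "n \<le> m" and e: "e \<ge> 0"
  shows "ennreal e * emeasure Mj (B \<inter> Vt f0 f1 j k e m T) \<le> emeasure Mk (B \<inter> Vt f0 f1 j k e m T)"
proof (induction T)
  case 0
  then show ?case by (simp add: Vt_def)
next
  case (Suc T)
  have Bs: "B \<in> sets Omega_inf" using depS_sets[OF B] .
  show ?case
  proof (cases "m \<le> T")
    case False
    then have "Vt f0 f1 j k e m (Suc T) = Vt f0 f1 j k e m T" by (auto simp: Vt_def)
    then show ?thesis using Suc.IH by simp
  next
    case True
    define E where "E = B \<inter> {w. lratio f0 f1 j k w T > e} - Vt f0 f1 j k e m T"
    have split: "B \<inter> Vt f0 f1 j k e m (Suc T) = (B \<inter> Vt f0 f1 j k e m T) \<union> E"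
      using True by (auto simp: Vt_def E_def less_Suc_eq)
    have disj: "(B \<inter> Vt f0 f1 j k e m T) \<inter> E = {}" by (auto simp: E_def)
    have depE: "dep T (\<lambda>w. w \<in> E)"
      unfolding dep_def
    proof (intro allI impI)
      fix w w' :: seq assume h: "\<forall>k<T. w k = w' k"
      have l: "lratio f0 f1 j k w t = lratio f0 f1 j k w' t" if "t \<le> T" for t
        using lratio_dep[of t f0 f1 j k] h that unfolding dep_def by auto
      have b: "(w \<in> B) = (w' \<in> B)" using B h nm True unfolding dep_def by auto
      show "(w \<in> E) = (w' \<in> E)"
        unfolding E_def Vt_def using l b by auto
    qed
    have Es: "E \<in> sets Omega_inf" using depS_sets[OF depE] .
    have X: "B \<inter> Vt f0 f1 j k e m T \<in> sets Omega_inf" using Bs Vt_sets by auto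
    have "ennreal e * emeasure Mj E \<le> ennreal 1 * emeasure Mk E"
      by (rule compare[OF Mj Mk depE e]) (use pw_le_when_ratio e in \<open>auto simp: E_def\<close>)
    then have Ele: "ennreal e * emeasure Mj E \<le> emeasure Mk E" by simp
    have "ennreal e * emeasure Mj (B \<inter> Vt f0 f1 j k e m (Suc T))
        = ennreal e * emeasure Mj (B \<inter> Vt f0 f1 j k e m T) + ennreal e * emeasure Mj E"
      unfolding split using X Es disj induced_sets[OF Mj]
      by (subst plus_emeasure[symmetric]) (auto simp: distrib_left)
    also have "\<dots> \<le> emeasure Mk (B \<inter> Vt f0 f1 j k e m T) + emeasure Mk E"
      using Suc.IH Ele by (rule add_mono)
    also have "\<dots> = emeasure Mk (B \<inter> Vt f0 f1 j k e m (Suc T))"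
      unfolding split using X Es disj induced_sets[OF Mk]
      by (subst plus_emeasure) auto
    finally show ?thesis .
  qed
qed

definition sdiff :: "'a set \<Rightarrow> 'a set \<Rightarrow> 'a set" where
  "sdiff A B = (A - B) \<union> (B - A)"

definition Gcyl :: "seq set set" where
  "Gcyl = {C. \<exists>n. dep n (\<lambda>w. w \<in> C)}"

lemma Gcyl_Int: "a \<in> Gcyl \<Longrightarrow> b \<in> Gcyl \<Longrightarrow> a \<inter> b \<in> Gcyl"
proof -
  assume "a \<in> Gcyl" "b \<in> Gcyl"
  then obtain n1 n2 where "dep n1 (\<lambda>w. w \<in> a)" "dep n2 (\<lambda>w. w \<in> b)" unfolding Gcyl_def by auto
  then have "dep (n1+n2) (\<lambda>w. w \<in> a)" "dep (n1+n2) (\<lambda>w. w \<in> b)" by (auto intro: dep_mono)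
  then have "dep (n1+n2) (\<lambda>w. w \<in> a \<inter> b)" unfolding dep_def by blast
  then show ?thesis unfolding Gcyl_def by auto
qed

lemma Gcyl_Un: "a \<in> Gcyl \<Longrightarrow> b \<in> Gcyl \<Longrightarrow> a \<union> b \<in> Gcyl"
proof -
  assume "a \<in> Gcyl" "b \<in> Gcyl"
  then obtain n1 n2 where "dep n1 (\<lambda>w. w \<in> a)" "dep n2 (\<lambda>w. w \<in> b)" unfolding Gcyl_def by auto
  then have "dep (n1+n2) (\<lambda>w. w \<in> a)" "dep (n1+n2) (\<lambda>w. w \<in> b)" by (auto intro: dep_mono)
  then have "dep (n1+n2) (\<lambda>w. w \<in> a \<union> b)" unfolding dep_def by blast
  then show ?thesis unfolding Gcyl_def by auto
qed

lemma Gcyl_compl: "a \<in> Gcyl \<Longrightarrow> UNIV - a \<in> Gcyl"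
  unfolding Gcyl_def dep_def by auto

lemma Gcyl_empty: "{} \<in> Gcyl"
  unfolding Gcyl_def dep_def by auto

lemma Gcyl_UN: "finite I \<Longrightarrow> (\<And>i. i \<in> I \<Longrightarrow> C i \<in> Gcyl) \<Longrightarrow> (\<Union>i\<in>I. C i) \<in> Gcyl"
  by (induction I rule: finite_induct) (auto intro: Gcyl_Un Gcyl_empty)

lemma Gcyl_sets: "Gcyl \<subseteq> sets Omega_inf"
  unfolding Gcyl_def using depS_sets by auto

lemma sets_Omega_gen: "sets Omega_inf = sigma_sets UNIV Gcyl"
proof (rule antisym)
  have "sets Omega_inf = sigma_sets UNIV {{f. f i \<in> A} | i A. True}"
    unfolding Omega_inf_def sets_PiM_single by simp
  also have "\<dots> \<subseteq> sigma_sets UNIV Gcyl"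
  proof (rule sigma_sets_subseteq, safe)
    fix i :: nat and A :: "bool set"
    have "dep (Suc i) (\<lambda>w. w \<in> {f. f i \<in> A})" unfolding dep_def by auto
    then show "{f. f i \<in> A} \<in> Gcyl" unfolding Gcyl_def by blast
  qed
  finally show "sets Omega_inf \<subseteq> sigma_sets UNIV Gcyl" .
next
  show "sigma_sets UNIV Gcyl \<subseteq> sets Omega_inf"
    using sets.sigma_sets_subset[OF Gcyl_sets] by simp
qed

lemma tail_small:
  assumes M: "finite_measure M" and A: "range A \<subseteq> sets M" and d: "d > 0"
  shows "eventually (\<lambda>N. measure M ((\<Union>i. A i) - (\<Union>i<N. A i)) < d) sequentially"
proof -
  interpret finite_measure M by (rule M)
  let ?S = "\<lambda>N. \<Union>i<N. A i"
  have Ss: "range ?S \<subseteq> sets M" using A by auto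
  have inc: "incseq ?S" unfolding incseq_def by (intro allI impI UN_mono) auto
  have U: "(\<Union>N. ?S N) = (\<Union>i. A i)" by auto
  have lim: "(\<lambda>N. measure M (?S N)) \<longlonglongrightarrow> measure M (\<Union>i. A i)"
    using finite_Lim_measure_incseq[OF Ss inc] unfolding U .
  have "(\<lambda>N. measure M (\<Union>i. A i) - measure M (?S N)) \<longlonglongrightarrow> measure M (\<Union>i. A i) - measure M (\<Union>i. A i)"
    by (intro tendsto_diff tendsto_const lim)
  then have "eventually (\<lambda>N. measure M (\<Union>i. A i) - measure M (?S N) < d) sequentially"
    using d by (intro order_tendstoD(2)) auto
  moreover have "measure M ((\<Union>i. A i) - ?S N) = measure M (\<Union>i. A i) - measure M (?S N)" for N
    using A by (intro finite_measure_Diff) auto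
  ultimately show ?thesis by simp
qed

lemma union_bound:
  fixes A C :: "nat \<Rightarrow> 'a set"
  assumes M: "finite_measure M" and A: "range A \<subseteq> sets M" and C: "range C \<subseteq> sets M"
  shows "measure M (sdiff (\<Union>i. A i) (\<Union>i<N. C i)) \<le>
     measure M ((\<Union>i. A i) - (\<Union>i<N. A i)) + (\<Sum>i<N. measure M (sdiff (A i) (C i)))"
proof -
  interpret finite_measure M by (rule M)
  have sub: "sdiff (\<Union>i. A i) (\<Union>i<N. C i) \<subseteq> ((\<Union>i. A i) - (\<Union>i<N. A i)) \<union> (\<Union>i<N. sdiff (A i) (C i))"
    unfolding sdiff_def by blast
  have s1: "(\<Union>i. A i) - (\<Union>i<N. A i) \<in> sets M" 
  proof -
    have "(\<Union>i. A i) \<in> sets M" using A by (rule sets.countable_nat_UN)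
    moreover have "(\<Union>i<N. A i) \<in> sets M" using A by auto
    ultimately show ?thesis by auto
  qed
  have sd: "sdiff (A i) (C i) \<in> sets M" for i
    using A C unfolding sdiff_def by (intro sets.Un sets.Diff) auto
  have s2: "(\<Union>i<N. sdiff (A i) (C i)) \<in> sets M" using sd by (intro sets.finite_UN) auto
  have "measure M (sdiff (\<Union>i. A i) (\<Union>i<N. C i)) \<le>
      measure M (((\<Union>i. A i) - (\<Union>i<N. A i)) \<union> (\<Union>i<N. sdiff (A i) (C i)))"
    using s1 s2 by (intro finite_measure_mono[OF sub]) auto
  also have "\<dots> \<le> measure M ((\<Union>i. A i) - (\<Union>i<N. A i)) + measure M (\<Union>i<N. sdiff (A i) (C i))"
    using s1 s2 by (rule measure_Un_le)
  also have "measure M (\<Union>i<N. sdiff (A i) (C i)) \<le> (\<Sum>i<N. measure M (sdiff (A i) (C i)))"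
    using sd by (intro finite_measure_subadditive_finite) auto
  finally show ?thesis by simp
qed

lemma Int_stable_Gcyl: "Int_stable Gcyl"
  unfolding Int_stable_def using Gcyl_Int by auto

lemma approx_aux:
  fixes A :: "nat \<Rightarrow> seq set"
  assumes M: "finite_measure M" "sets M = sets Omega_inf"
    and A: "range A \<subseteq> sets Omega_inf" and C: "range C \<subseteq> Gcyl"
    and tail: "measure M ((\<Union>i. A i) - (\<Union>i<N. A i)) < d/2"
    and each: "\<And>i. measure M (sdiff (A i) (C i)) < d / (2 * (real N + 1))"
    and d: "d > 0"
  shows "measure M (sdiff (\<Union>i. A i) (\<Union>i<N. C i)) < d"
proof -
  have "measure M (sdiff (\<Union>i. A i) (\<Union>i<N. C i)) \<le>
     measure M ((\<Union>i. A i) - (\<Union>i<N. A i)) + (\<Sum>i<N. measure M (sdiff (A i) (C i)))"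
    using A C Gcyl_sets M by (intro union_bound) auto
  also have "(\<Sum>i<N. measure M (sdiff (A i) (C i))) \<le> of_nat (card {..<N}) * (d / (2 * (real N + 1)))"
    using each by (intro sum_bounded_above less_imp_le) auto
  also have "of_nat (card {..<N}) * (d / (2 * (real N + 1))) \<le> d / 2"
    using d by (simp add: field_simps)
  finally show ?thesis using tail by simp
qed

lemma approx:
  assumes M1: "finite_measure M1" "sets M1 = sets Omega_inf"
    and M2: "finite_measure M2" "sets M2 = sets Omega_inf"
    and B: "B \<in> sets Omega_inf"
  shows "\<forall>d>0. \<exists>C\<in>Gcyl. measure M1 (sdiff B C) < d \<and> measure M2 (sdiff B C) < d"
proof -
  have BG: "B \<in> sigma_sets UNIV Gcyl" using B sets_Omega_gen by simp
  have PU: "Gcyl \<subseteq> Pow UNIV" by simp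
  show ?thesis using Int_stable_Gcyl PU BG
  proof (induct B rule: sigma_sets_induct_disjoint)
    case (basic A)
    then show ?case by (intro allI impI bexI[of _ A]) (auto simp: sdiff_def)
  next
    case empty
    then show ?case by (intro allI impI bexI[of _ "{}"]) (auto simp: sdiff_def Gcyl_empty)
  next
    case (compl A)
    show ?case
    proof (intro allI impI)
      fix d :: real assume "d > 0"
      then obtain C where "C \<in> Gcyl" "measure M1 (sdiff A C) < d" "measure M2 (sdiff A C) < d"
        using compl by blast
      moreover have "sdiff (UNIV - A) (UNIV - C) = sdiff A C" by (auto simp: sdiff_def)
      ultimately show "\<exists>C\<in>Gcyl. measure M1 (sdiff (UNIV - A) C) < d \<and> measure M2 (sdiff (UNIV - A) C) < d"
        by (intro bexI[of _ "UNIV - C"]) (auto intro: Gcyl_compl)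
    qed
  next
    case (union A)
    show ?case
    proof (intro allI impI)
      fix d :: real assume d: "d > 0"
      have As: "range A \<subseteq> sets Omega_inf" using union(2) sets_Omega_gen by simp
      have "eventually (\<lambda>N. measure M1 ((\<Union>i. A i) - (\<Union>i<N. A i)) < d/2) sequentially"
        using As M1 d by (intro tail_small) auto
      moreover have "eventually (\<lambda>N. measure M2 ((\<Union>i. A i) - (\<Union>i<N. A i)) < d/2) sequentially"
        using As M2 d by (intro tail_small) auto
      ultimately have "eventually (\<lambda>N. measure M1 ((\<Union>i. A i) - (\<Union>i<N. A i)) < d/2 \<and>
           measure M2 ((\<Union>i. A i) - (\<Union>i<N. A i)) < d/2) sequentially"
        by (rule eventually_conj)
      then obtain N where t1: "measure M1 ((\<Union>i. A i) - (\<Union>i<N. A i)) < d/2"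
          and t2: "measure M2 ((\<Union>i. A i) - (\<Union>i<N. A i)) < d/2"
        unfolding eventually_sequentially by blast
      define e where "e = d / (2 * (real N + 1))"
      have e: "e > 0" using d by (simp add: e_def)
      have "\<forall>i. \<exists>C. C \<in> Gcyl \<and> measure M1 (sdiff (A i) C) < e \<and> measure M2 (sdiff (A i) C) < e"
        using union(3) e by blast
      then obtain C where C: "\<And>i. C i \<in> Gcyl" "\<And>i. measure M1 (sdiff (A i) (C i)) < e"
          "\<And>i. measure M2 (sdiff (A i) (C i)) < e"
        by metis
      have CU: "(\<Union>i<N. C i) \<in> Gcyl" using C(1) by (intro Gcyl_UN) auto
      have "measure M1 (sdiff (\<Union>i. A i) (\<Union>i<N. C i)) < d"
        using M1 As C(1,2) t1 d unfolding e_def by (intro approx_aux) auto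
      moreover have "measure M2 (sdiff (\<Union>i. A i) (\<Union>i<N. C i)) < d"
        using M2 As C(1,3) t2 d unfolding e_def by (intro approx_aux) auto
      ultimately show "\<exists>C\<in>Gcyl. measure M1 (sdiff (\<Union>i. A i) C) < d \<and> measure M2 (sdiff (\<Union>i. A i) C) < d"
        using CU by blast
    qed
  qed
qed

definition Wset :: "strategy \<Rightarrow> strategy \<Rightarrow> nat \<Rightarrow> nat \<Rightarrow> real \<Rightarrow> seq set" where
  "Wset f0 f1 j k e = {w. \<forall>m. \<exists>t\<ge>m. lratio f0 f1 j k w t > e}"

lemma Wset_sets: "Wset f0 f1 j k e \<in> sets Omega_inf"
proof -
  have "{w \<in> space Omega_inf. \<forall>m. \<exists>t\<ge>m. lratio f0 f1 j k w t > e} \<in> sets Omega_inf"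
    by measurable
  then show ?thesis by (simp add: Wset_def)
qed

lemma R2:
  assumes Mj: "induced_measure f0 f1 j Mj" and Mk: "induced_measure f0 f1 k Mk"
    and B: "dep n (\<lambda>w. w \<in> B)" and e: "e \<ge> 0"
  shows "ennreal e * emeasure Mj (B \<inter> Wset f0 f1 j k e) \<le> emeasure Mk B"
proof -
  let ?V = "\<lambda>T. B \<inter> Vt f0 f1 j k e n T"
  have Bs: "B \<in> sets Omega_inf" using depS_sets[OF B] .
  have Vs: "range ?V \<subseteq> sets Mj" using Bs Vt_sets induced_sets[OF Mj] by auto
  have inc: "incseq ?V" unfolding incseq_def Vt_def by auto
  have sub: "B \<inter> Wset f0 f1 j k e \<subseteq> (\<Union>T. ?V T)"
  proof
    fix w assume "w \<in> B \<inter> Wset f0 f1 j k e"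
    then obtain t where "w \<in> B" "t \<ge> n" "lratio f0 f1 j k w t > e" by (auto simp: Wset_def)
    then have "w \<in> ?V (Suc t)" by (auto simp: Vt_def)
    then show "w \<in> (\<Union>T. ?V T)" by blast
  qed
  have "ennreal e * emeasure Mj (B \<inter> Wset f0 f1 j k e) \<le> ennreal e * emeasure Mj (\<Union>T. ?V T)"
  proof -
    have U: "(\<Union>T. ?V T) \<in> sets Mj" using Vs by (rule sets.countable_nat_UN)
    show ?thesis by (intro mult_left_mono emeasure_mono[OF sub U]) auto
  qed
  also have "\<dots> = ennreal e * (SUP T. emeasure Mj (?V T))"
    using Vs inc by (simp add: SUP_emeasure_incseq)
  also have "\<dots> = (SUP T. ennreal e * emeasure Mj (?V T))" by (rule SUP_mult_left_ennreal)
  also have "\<dots> \<le> emeasure Mk B"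
  proof (rule SUP_least)
    fix T
    have "ennreal e * emeasure Mj (?V T) \<le> emeasure Mk (?V T)"
      by (rule R2_finite[OF Mj Mk B order.refl e])
    also have "\<dots> \<le> emeasure Mk B" using Bs induced_sets[OF Mk] by (intro emeasure_mono) auto
    finally show "ennreal e * emeasure Mj (?V T) \<le> emeasure Mk B" .
  qed
  finally show ?thesis .
qed

lemma R3:
  assumes Mj: "induced_measure f0 f1 j Mj" and Mk: "induced_measure f0 f1 k Mk"
    and B: "B \<in> sets Omega_inf" and e: "e > 0"
  shows "e * measure Mj (B \<inter> Wset f0 f1 j k e) \<le> measure Mk B"
proof -
  interpret Pj: prob_space Mj using induced_prob[OF Mj] .
  interpret Pk: prob_space Mk using induced_prob[OF Mk] .
  have sj: "sets Mj = sets Omega_inf" and sk: "sets Mk = sets Omega_inf"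
    using induced_sets Mj Mk by auto
  have W: "Wset f0 f1 j k e \<in> sets Omega_inf" by (rule Wset_sets)
  show ?thesis
  proof (rule field_le_epsilon)
    fix eps :: real assume eps: "eps > 0"
    define d where "d = eps / (1 + e)"
    have d: "d > 0" using eps e by (simp add: d_def)
    obtain C where C: "C \<in> Gcyl" "measure Mj (sdiff B C) < d" "measure Mk (sdiff B C) < d"
      using approx[OF Pj.finite_measure_axioms sj Pk.finite_measure_axioms sk B] d by blast
    obtain n where Cn: "dep n (\<lambda>w. w \<in> C)" using C(1) unfolding Gcyl_def by auto
    have Cs: "C \<in> sets Omega_inf" using depS_sets[OF Cn] .
    have SD: "sdiff B C \<in> sets Omega_inf" using B Cs unfolding sdiff_def by auto
    have "ennreal e * emeasure Mj (C \<inter> Wset f0 f1 j k e) \<le> emeasure Mk C"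
      using e by (intro R2[OF Mj Mk Cn]) auto
    then have "ennreal (e * measure Mj (C \<inter> Wset f0 f1 j k e)) \<le> ennreal (measure Mk C)"
      using e by (simp add: Pj.emeasure_eq_measure Pk.emeasure_eq_measure ennreal_mult)
    then have RC: "e * measure Mj (C \<inter> Wset f0 f1 j k e) \<le> measure Mk C"
      by (simp add: ennreal_le_iff)
    have "measure Mj (B \<inter> Wset f0 f1 j k e) \<le> measure Mj ((C \<inter> Wset f0 f1 j k e) \<union> sdiff B C)"
      using Cs W SD sj by (intro Pj.finite_measure_mono) (auto simp: sdiff_def)
    also have "\<dots> \<le> measure Mj (C \<inter> Wset f0 f1 j k e) + measure Mj (sdiff B C)"
      using Cs W SD sj by (intro measure_Un_le) auto
    finally have m1: "measure Mj (B \<inter> Wset f0 f1 j k e) \<le> measure Mj (C \<inter> Wset f0 f1 j k e) + d"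
      using C(2) by simp
    have "measure Mk C \<le> measure Mk (B \<union> sdiff B C)"
      using B SD sk by (intro Pk.finite_measure_mono) (auto simp: sdiff_def)
    also have "\<dots> \<le> measure Mk B + measure Mk (sdiff B C)"
      using B SD sk by (intro measure_Un_le) auto
    finally have m2: "measure Mk C \<le> measure Mk B + d" using C(3) by simp
    have "e * measure Mj (B \<inter> Wset f0 f1 j k e) \<le> e * (measure Mj (C \<inter> Wset f0 f1 j k e) + d)"
      using m1 e by (intro mult_left_mono) auto
    also have "\<dots> \<le> measure Mk B + d + e * d" using RC m2 by (simp add: distrib_left)
    finally have fin: "e * measure Mj (B \<inter> Wset f0 f1 j k e) \<le> measure Mk B + d + e * d" .
    have "d + e * d = eps"
    proof -
      have "d + e * d = d * (1 + e)" by (simp add: algebra_simps)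
      also have "\<dots> = eps" using e by (simp add: d_def)
      finally show ?thesis .
    qed
    then show "e * measure Mj (B \<inter> Wset f0 f1 j k e) \<le> measure Mk B + eps" using fin by linarith
  qed
qed

lemma step_null:
  assumes Mj: "induced_measure f0 f1 j Mj"
  shows "{w. step j f0 f1 w n = 0} \<in> null_sets Mj"
proof -
  have D: "dep (Suc n) (\<lambda>w. w \<in> {w. step j f0 f1 w n = 0})"
    unfolding dep_def using step_dep by (metis mem_Collect_eq)
  have "ennreal 1 * emeasure Mj {w. step j f0 f1 w n = 0} \<le> ennreal 0 * emeasure Mj {w. step j f0 f1 w n = 0}"
  proof (rule compare[OF Mj Mj D])
    fix w assume "w \<in> {w. step j f0 f1 w n = 0}"
    then have "pw j f0 f1 w (Suc n) = 0" unfolding pw_def by (intro prod_zero) auto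
    then show "1 * pw j f0 f1 w (Suc n) \<le> 0 * pw j f0 f1 w (Suc n)" by simp
  qed auto
  then have "emeasure Mj {w. step j f0 f1 w n = 0} = 0" by simp
  moreover have "{w. step j f0 f1 w n = 0} \<in> sets Mj"
    using depS_sets[OF D] induced_sets[OF Mj] by auto
  ultimately show ?thesis by auto
qed

lemma key_reasonable:
  assumes Mj: "induced_measure f0 f1 j Mj" and Mk: "induced_measure f0 f1 k Mk"
    and A: "A \<in> sets Omega_inf" and A0: "emeasure Mk A = 0"
  shows "AE w in Mj. w \<in> A \<longrightarrow> (upperD f0 f1 j k w = 0 \<and> lowerD f0 f1 j k w = 0)"
proof -
  interpret Pj: prob_space Mj using induced_prob[OF Mj] .
  interpret Pk: prob_space Mk using induced_prob[OF Mk] .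
  have sj: "sets Mj = sets Omega_inf" using induced_sets[OF Mj] .
  let ?e = "\<lambda>r::nat. inverse (real (Suc r))"
  let ?N2 = "\<lambda>r. A \<inter> Wset f0 f1 j k (?e r)"
  have N2: "?N2 r \<in> null_sets Mj" for r
  proof -
    have "?e r * measure Mj (?N2 r) \<le> measure Mk A" by (rule R3[OF Mj Mk A]) auto
    also have "measure Mk A = 0" using A0 by (simp add: Pk.emeasure_eq_measure)
    finally have "measure Mj (?N2 r) \<le> 0"
      by (simp add: mult_le_0_iff)
    then have "measure Mj (?N2 r) = 0" using measure_nonneg[of Mj "?N2 r"] by linarith
    then have "emeasure Mj (?N2 r) = 0" by (simp add: Pj.emeasure_eq_measure)
    moreover have "?N2 r \<in> sets Mj" using A Wset_sets sj by auto
    ultimately show ?thesis by auto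
  qed
  let ?N = "(\<Union>n. {w. step j f0 f1 w n = 0}) \<union> (\<Union>r. ?N2 r)"
  have N: "?N \<in> null_sets Mj"
    using step_null[OF Mj] N2 by (intro null_sets.Un null_sets_UN) auto
  have main: "upperD f0 f1 j k w = 0 \<and> lowerD f0 f1 j k w = 0" if w: "w \<in> A" "w \<notin> ?N" for w
  proof -
    have pos: "\<forall>n. step j f0 f1 w n > 0"
      using w(2) step_nonneg[of j f0 f1 w] by (auto simp: order.order_iff_strict)
    have ev: "\<exists>m. \<forall>t\<ge>m. lratio f0 f1 j k w t \<le> ?e r" for r
      using w(1,2) by (auto simp: Wset_def not_less)
    have lim: "(\<lambda>t. lratio f0 f1 j k w t) \<longlonglongrightarrow> 0"
    proof (rule LIMSEQ_I)
      fix r :: real assume "r > 0"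
      then obtain q where q: "?e q < r" using reals_Archimedean by blast
      obtain m where "\<forall>t\<ge>m. lratio f0 f1 j k w t \<le> ?e q" using ev by blast
      then show "\<exists>no. \<forall>n\<ge>no. norm (lratio f0 f1 j k w n - 0) < r"
        using q lratio_nonneg[of f0 f1 j k w] by (intro exI[of _ m]) force
    qed
    then have "(\<lambda>t. ereal (lratio f0 f1 j k w t)) \<longlonglongrightarrow> ereal 0" using lim_ereal by blast
    then have "limsup (\<lambda>t. ereal (lratio f0 f1 j k w t)) = 0"
      "liminf (\<lambda>t. ereal (lratio f0 f1 j k w t)) = 0"
      by (auto simp: zero_ereal_def intro: lim_imp_Limsup lim_imp_Liminf)
    then show ?thesis
      using pos by (auto simp: upperD_alt lowerD_alt)
  qed
  show ?thesis
  proof (rule AE_I'[OF N], rule subsetI)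
    fix x assume "x \<in> {x \<in> space Mj. \<not> (x \<in> A \<longrightarrow> upperD f0 f1 j k x = 0 \<and> lowerD f0 f1 j k x = 0)}"
    then have "x \<in> A" "\<not> (upperD f0 f1 j k x = 0 \<and> lowerD f0 f1 j k x = 0)" by auto
    then show "x \<in> ?N" using main by blast
  qed
qed

lemma reason:
  assumes P: "\<forall>f0 f1. \<forall>i\<in>{0,1}. induced_measure f0 f1 i (P f0 f1 i)"
  shows "reasonable P derivative_test"
  unfolding reasonable_def
proof (intro allI ballI impI)
  fix f0 f1 and i :: nat and A
  assume i: "i \<in> {0,1}" and A: "A \<in> sets Omega_inf"
    and pos: "emeasure (P f0 f1 i) A > 0" and null: "emeasure (P f0 f1 (1 - i)) A = 0"
  have P0: "induced_measure f0 f1 0 (P f0 f1 0)" and P1: "induced_measure f0 f1 1 (P f0 f1 1)"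
    using P by auto
  let ?S = "{w \<in> space Omega_inf. derivative_test w f0 f1 = real i}"
  have Pi: "induced_measure f0 f1 i (P f0 f1 i)" using P i by auto
  have AE: "AE w in P f0 f1 i. w \<in> A \<longrightarrow> derivative_test w f0 f1 = real i"
  proof (cases "i = 0")
    case True
    have k: "AE w in P f0 f1 0. w \<in> A \<longrightarrow> (upperD f0 f1 0 1 w = 0 \<and> lowerD f0 f1 0 1 w = 0)"
      using null True by (intro key_reasonable[OF P0 P1 A]) auto
    have Zn: "{w. upperD f0 f1 1 0 w = 0 \<and> lowerD f0 f1 1 0 w = 0} \<in> null_sets (P f0 f1 0)"
      using Z_null[OF P1 P0] Zsets induced_sets[OF P0] by auto
    have z: "AE w in P f0 f1 0. \<not> (upperD f0 f1 1 0 w = 0 \<and> lowerD f0 f1 1 0 w = 0)"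
      by (rule AE_I'[OF Zn]) auto
    from k z have "AE w in P f0 f1 0. w \<in> A \<longrightarrow> derivative_test w f0 f1 = 0"
      by eventually_elim (auto simp: derivative_test_alt)
    then show ?thesis unfolding True by simp
  next
    case False
    then have i1: "i = 1" using i by auto
    have k: "AE w in P f0 f1 1. w \<in> A \<longrightarrow> (upperD f0 f1 1 0 w = 0 \<and> lowerD f0 f1 1 0 w = 0)"
      using null i1 by (intro key_reasonable[OF P1 P0 A]) auto
    from k have "AE w in P f0 f1 1. w \<in> A \<longrightarrow> derivative_test w f0 f1 = 1"
      by eventually_elim (auto simp: derivative_test_alt)
    then show ?thesis unfolding i1 by simp
  qed
  have "emeasure (P f0 f1 i) A = emeasure (P f0 f1 i) (A \<inter> ?S)"
  proof (rule emeasure_eq_AE)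
    show "AE x in P f0 f1 i. (x \<in> A) = (x \<in> A \<inter> ?S)" using AE by eventually_elim auto
    show "A \<in> sets (P f0 f1 i)" using A induced_sets[OF Pi] by simp
    show "A \<inter> ?S \<in> sets (P f0 f1 i)" using A test_sets induced_sets[OF Pi] by auto
  qed
  then show "emeasure (P f0 f1 i) (A \<inter> ?S) > 0" using pos by simp
qed

theorem theorem1:
  fixes P :: "strategy \<Rightarrow> strategy \<Rightarrow> nat \<Rightarrow> seq measure"
  assumes "\<forall>f0 f1. \<forall>i\<in>{0,1}. induced_measure f0 f1 i (P f0 f1 i)"
  shows "comparison_test derivative_test \<and> reasonable P derivative_test \<and> error_free P derivative_test"
  using comparison reason[OF assms] errfree[OF assms] by blast

end
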